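(* Let $n\ge 2$ and let $\mathsf r=[r_1,\dots,r_{2n-2}]\in\textsc{fact}(\lambda_n)$. Then $\mathsf r$ is tree-like if and only if there exist integers $a_0,\dots,a_{2n-2}$ such that, for every $\ell=1,\dots,2n-2$, we have $r_\ell=(\!(a_{\ell-1},a_\ell)\!)$ and $|a_\ell-a_{\ell-1}|<n$.
   Context: The affine symmetric group $\widetilde S_n$ is the group, under composition $(vw)(k)=v(w(k))$, of bijections $w:\mathbb Z\to\mathbb Z$ with $w(i+n)=w(i)+n$ for all $i$ and $\sum_{i=1}^n w(i)=\binom{n+1}{2}$. For integers $i\not\equiv j\pmod n$, $(\!(i,j)\!)$ is the affine reflection interchanging $i+kn$ and $j+kn$ for every $k\in\mathbb Z$ and fixing all other integers; thus $(\!(i,j)\!)=(\!(j,i)\!)=(\!(i+kn,j+kn)\!)$. Let $\lambda_n\in\widetilde S_n$ be the element with $\lambda_n(k)=k+n$ if $k\not\equiv0\pmod n$ and $\lambda_n(k)=k-n(n-1)$ if $k\equiv 0\pmod n$ (translation by $(1,\dots,1,-n+1)$). The reflection length of $w$ is the minimal number of reflections with product $w$; $\lambda_n$ has reflection length $2n-2$. A factorization of $w$ is a sequence $[r_1,\dots,r_m]$ of reflections with $w=r_1r_2\cdots r_m$, and $\textsc{fact}(\lambda_n)$ is the set of factorizations of $\lambda_n$ with $m=2n-2$. A factorization $[r_1,\dots,r_{2n-2}]\in\textsc{fact}(\lambda_n)$ is tree-like if one can write $r_k=(\!(a_{k-1},b_k)\!)$ with integers $a_{k-1}<b_k$ for $1\le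 k\le 2n-2$, such that $a_k\equiv b_k\pmod n$ for $1\le k\le 2n-3$. *)

theory Defs
  imports "HOL-Number_Theory.Cong"
begin

definition affine_perm :: "nat \<Rightarrow> (int \<Rightarrow> int) \<Rightarrow> bool" where
  "affine_perm n w \<longleftrightarrow> bij w \<and> (\<forall>i. w (i + int n) = w i + int n)
     \<and> (\<Sum>i=1..int n. w i) = int n * (int n + 1) div 2"

text \<open>The affine reflection ((i,j)), meaningful for i and j incongruent mod n:
  it interchanges i+kn and j+kn for all k and fixes all other integers.\<close>
definition aff_refl :: "nat \<Rightarrow> int \<Rightarrow> int \<Rightarrow> int \<Rightarrow> int" where
  "aff_refl n i j = (\<lambda>k. if [k = i] (mod int n) then k + (j - i)
                        else if [k = j] (mod int n) then k - (j - i) else k)"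

definition is_aff_refl :: "nat \<Rightarrow> (int \<Rightarrow> int) \<Rightarrow> bool" where
  "is_aff_refl n r \<longleftrightarrow> (\<exists>i j. \<not> [i = j] (mod int n) \<and> r = aff_refl n i j)"

definition lambda_aff :: "nat \<Rightarrow> int \<Rightarrow> int" where
  "lambda_aff n = (\<lambda>k. if int n dvd k then k - int n * (int n - 1) else k + int n)"

text \<open>Product r_1 r_2 ... r_m, composition (v w)(k) = v (w k).\<close>
definition refl_prod :: "(int \<Rightarrow> int) list \<Rightarrow> int \<Rightarrow> int" where
  "refl_prod rs = foldr (\<circ>) rs id"

definition fact_lambda :: "nat \<Rightarrow> (int \<Rightarrow> int) list set" where
  "fact_lambda n = {rs. length rs = 2 * n - 2 \<and> (\<forall>r\<in>set rs. is_aff_refl n r)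
                        \<and> refl_prod rs = lambda_aff n}"

text \<open>Tree-like factorizations (list index l-1 holds r_l).\<close>
definition tree_like :: "nat \<Rightarrow> (int \<Rightarrow> int) list \<Rightarrow> bool" where
  "tree_like n rs \<longleftrightarrow> (\<exists>a b :: nat \<Rightarrow> int.
     (\<forall>k\<in>{1..2*n-2}. a (k - 1) < b k \<and> \<not> [a (k - 1) = b k] (mod int n)
                       \<and> rs ! (k - 1) = aff_refl n (a (k - 1)) (b k))
     \<and> (\<forall>k\<in>{1..2*n-3}. [a k = b k] (mod int n)))"

end

theory Submission
  imports Defs
begin

lemma aff_refl_mod:
  assumes "\<not> [i = j] (mod int n)"
  shows "aff_refl n i j x mod int n = (if x mod int n = i mod int n then j mod int n
          else if x mod int n = j mod int n then i mod int n else x mod int n)"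
proof (cases "x mod int n = i mod int n")
  case True
  have "(x + (j - i)) mod int n = (i + (j - i)) mod int n" by (rule mod_add_cong[OF True refl])
  then show ?thesis using True by (simp add: aff_refl_def cong_def)
next
  case False
  show ?thesis
  proof (cases "x mod int n = j mod int n")
    case True
    have "(x - (j - i)) mod int n = (j - (j - i)) mod int n" by (rule mod_diff_cong[OF True refl])
    then show ?thesis using True False by (simp add: aff_refl_def cong_def)
  next
    case False2: False
    then show ?thesis using False by (simp add: aff_refl_def cong_def)
  qed
qed

lemma aff_refl_cls:
  assumes "\<not> [i = j] (mod int n)"
  shows "(aff_refl n i j x mod int n = aff_refl n i j y mod int n) \<longleftrightarrow> (x mod int n = y mod int n)"
  using assms by (auto simp: aff_refl_mod[OF assms] cong_def split: if_splits)

lemma aff_refl_sym: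
  assumes "\<not> [i = j] (mod int n)"
  shows "aff_refl n i j = aff_refl n j i"
  using assms by (auto simp: aff_refl_def fun_eq_iff cong_def)

lemma aff_refl_shift:
  assumes "[i = i'] (mod int n)" "j' - i' = j - i"
  shows "aff_refl n i j = aff_refl n i' j'"
proof -
  have j': "j' = j + (i' - i)" using assms(2) by simp
  have jj: "[j = j'] (mod int n)"
    using assms(1) unfolding j' cong_iff_dvd_diff by (simp add: dvd_diff_commute)
  have "\<And>k. [k = i] (mod int n) \<longleftrightarrow> [k = i'] (mod int n)"
    using assms(1) cong_trans cong_sym by metis
  moreover have "\<And>k. [k = j] (mod int n) \<longleftrightarrow> [k = j'] (mod int n)"
    using jj cong_trans cong_sym by metis
  ultimately show ?thesis using assms(2) by (simp add: aff_refl_def fun_eq_iff)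
qed


lemma pairing:
  fixes n :: nat and rs :: "(int \<Rightarrow> int) list" and a :: "nat \<Rightarrow> int"
  assumes n2: "n \<ge> 2" and len: "length rs = 2*n-2" and prd: "refl_prod rs = lambda_aff n"
    and ch: "\<And>i. i < 2*n-2 \<Longrightarrow> \<not> [a i = a (Suc i)] (mod int n) \<and> rs!i = aff_refl n (a i) (a (Suc i))"
  shows "\<And>i. i < 2*n-2 \<Longrightarrow> \<exists>j<2*n-2. j \<noteq> i \<and>
     ((a (Suc i) - a i) + (a (Suc j) - a j) = int n \<or> (a (Suc i) - a i) + (a (Suc j) - a j) = - (int n * (int n - 1)))"
proof -
  define m where "m = 2*n-2"
  define N where "N = int n"
  have Npos: "N > 0" using n2 by (simp add: N_def)
  define T where "T k = foldr (\<circ>) (drop k rs) id" for k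
  define d where "d i = a (Suc i) - a i" for i
  have chm: "\<And>i. i < m \<Longrightarrow> a i mod N \<noteq> a (Suc i) mod N \<and> rs!i = aff_refl n (a i) (a (Suc i))"
    using ch unfolding m_def N_def cong_def by blast
  have ncong: "\<And>i. i < m \<Longrightarrow> \<not> [a i = a (Suc i)] (mod int n)"
    using ch unfolding m_def by blast
  have Tm: "T m = id" unfolding T_def m_def using len by simp
  have Tstep: "T k = (rs!k) \<circ> T (Suc k)" if "k < m" for k
  proof -
    have "drop k rs = rs!k # drop (Suc k) rs" using Cons_nth_drop_Suc[of k rs] that len m_def by simp
    then show ?thesis unfolding T_def by simp
  qed
  have T0: "T 0 = lambda_aff n" using prd unfolding T_def refl_prod_def by simp
  have rider: "T k (a m) = a k" if "k \<le> m" for k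
    using that
  proof (induction k rule: inc_induct)
    case base
    then show ?case using Tm by simp
  next
    case (step k)
    have "T k (a m) = aff_refl n (a k) (a (Suc k)) (a (Suc k))"
      using Tstep[OF step(2)] step(3) chm[OF step(2)] by simp
    also have "\<dots> = a k" using chm[OF step(2)] unfolding aff_refl_def cong_def N_def by auto
    finally show ?case .
  qed
  have Tcls: "(T k x mod N = T k y mod N) \<longleftrightarrow> (x mod N = y mod N)" if "k \<le> m" for k x y
    using that
  proof (induction k rule: inc_induct)
    case base
    then show ?case using Tm by simp
  next
    case (step k)
    show ?case using Tstep[OF step(2)] chm[OF step(2)] step(3)
      aff_refl_cls[OF ncong[OF step(2)], of "T (Suc k) x" "T (Suc k) y"] unfolding N_def by simp
  qed
  define C where "C = {0..<N} - {a m mod N}"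
  define U where "U c = {i. i < m \<and> T (Suc i) c mod N = a i mod N}" for c
  have finU: "finite (U c)" for c unfolding U_def by auto
  have Usub: "U c \<subseteq> {0..<m}" for c unfolding U_def by auto
  have nonrider: "T k c mod N \<noteq> a k mod N" if "c \<in> C" "k \<le> m" for c k
  proof
    assume "T k c mod N = a k mod N"
    then have "T k c mod N = T k (a m) mod N" using rider[OF that(2)] by simp
    then have "c mod N = a m mod N" using Tcls[OF that(2)] by simp
    moreover have "c mod N = c" using that(1) unfolding C_def by auto
    ultimately show False using that(1) unfolding C_def by auto
  qed
  have move: "T i c = T (Suc i) c + (if i \<in> U c then d i else 0)" if "c \<in> C" "i < m" for c i
  proof -
    have ne: "T (Suc i) c mod N \<noteq> a (Suc i) mod N" using nonrider[OF that(1)] that(2) by simp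
    have "T i c = aff_refl n (a i) (a (Suc i)) (T (Suc i) c)"
      using Tstep[OF that(2)] chm[OF that(2)] by simp
    then show ?thesis using ne that(2) unfolding aff_refl_def cong_def U_def d_def N_def by auto
  qed
  have sumf: "T k c = c + (\<Sum>i\<in>U c \<inter> {k..<m}. d i)" if "c \<in> C" "k \<le> m" for c k
    using that(2)
  proof (induction k rule: inc_induct)
    case base
    then show ?case using Tm by simp
  next
    case (step k)
    have eq: "U c \<inter> {k..<m} = (if k \<in> U c then insert k (U c \<inter> {Suc k..<m}) else U c \<inter> {Suc k..<m})"
      using step(2) by (auto simp: le_less Suc_le_eq)
    show ?case
    proof (cases "k \<in> U c")
      case True
      then show ?thesis using move[OF that(1) step(2)] step(3) eq by (simp add: finU)
    next
      case False
      then show ?thesis using move[OF that(1) step(2)] step(3) eq by simp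
    qed
  qed
  have Tsum: "lambda_aff n c = c + (\<Sum>i\<in>U c. d i)" if "c \<in> C" for c
  proof -
    have "U c \<inter> {0..<m} = U c" using Usub by auto
    then show ?thesis using sumf[OF that, of 0] T0 by simp
  qed
  have lam: "lambda_aff n c - c = N \<or> lambda_aff n c - c = - (N * (N - 1))" for c
    unfolding lambda_aff_def N_def by auto
  have lamdvd: "N dvd (lambda_aff n c - c)" for c
    unfolding lambda_aff_def N_def by auto
  have lamne: "lambda_aff n c \<noteq> c" for c
    using lam[of c] Npos n2 unfolding N_def by (auto simp: algebra_simps)
  have card2: "card (U c) \<ge> 2" if "c \<in> C" for c
  proof (rule ccontr)
    assume "\<not> card (U c) \<ge> 2"
    then have "card (U c) = 0 \<or> card (U c) = 1" by auto
    then show False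
    proof
      assume "card (U c) = 0"
      then have "U c = {}" using finU by simp
      then show False using Tsum[OF that] lamne[of c] by simp
    next
      assume "card (U c) = 1"
      then obtain i where i: "U c = {i}" by (auto simp: card_Suc_eq)
      then have im: "i < m" using Usub[of c] by auto
      have "lambda_aff n c - c = d i" using Tsum[OF that] i by simp
      then have "N dvd d i" using lamdvd[of c] by simp
      then have "a (Suc i) mod N = a i mod N" unfolding d_def by (simp add: mod_eq_dvd_iff)
      then show False using chm[OF im] by simp
    qed
  qed
  have cover: "\<exists>c\<in>C. i \<in> U c" if "i < m" for i
  proof -
    define f where "f c = T (Suc i) c mod N" for c
    have si: "Suc i \<le> m" using that by simp
    have inj: "inj_on f {0..<N}"
    proof
      fix x y assume "x \<in> {0..<N}" "y \<in> {0..<N}" "f x = f y"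
      then show "x = y" using Tcls[OF si, of x y] unfolding f_def by auto
    qed
    have sub: "f ` {0..<N} \<subseteq> {0..<N}" unfolding f_def using Npos by auto
    have img: "f ` {0..<N} = {0..<N}" using endo_inj_surj[OF _ sub inj] by simp
    have "a i mod N \<in> {0..<N}" using Npos by auto
    then obtain c where c: "c \<in> {0..<N}" "f c = a i mod N" using img by (metis imageE)
    have "c \<noteq> a m mod N"
    proof
      assume "c = a m mod N"
      then have "c mod N = a m mod N" by simp
      then have "f c = T (Suc i) (a m) mod N" using Tcls[OF si, of c "a m"] unfolding f_def by simp
      then have "a i mod N = a (Suc i) mod N" using c(2) rider[OF si] by simp
      then show False using chm[OF that] by simp
    qed
    then have "c \<in> C" using c(1) unfolding C_def by auto
    moreover have "i \<in> U c" using c(2) that unfolding U_def f_def by simp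
    ultimately show ?thesis by blast
  qed
  have disj: "U c \<inter> U c' = {}" if "c \<in> C" "c' \<in> C" "c \<noteq> c'" for c c'
  proof (rule ccontr)
    assume "U c \<inter> U c' \<noteq> {}"
    then obtain i where i: "i \<in> U c" "i \<in> U c'" by blast
    then have "i < m" "T (Suc i) c mod N = T (Suc i) c' mod N" unfolding U_def by auto
    then have "c mod N = c' mod N" using Tcls[of "Suc i" c c'] by simp
    then show False using that unfolding C_def by auto
  qed
  have unionU: "(\<Union>c\<in>C. U c) = {0..<m}"
  proof
    show "(\<Union>c\<in>C. U c) \<subseteq> {0..<m}" using Usub by blast
    show "{0..<m} \<subseteq> (\<Union>c\<in>C. U c)"
    proof
      fix i assume "i \<in> {0..<m}"
      then obtain c where "c \<in> C" "i \<in> U c" using cover by auto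
      then show "i \<in> (\<Union>c\<in>C. U c)" by blast
    qed
  qed
  have finC: "finite C" unfolding C_def by simp
  have sumcard: "(\<Sum>c\<in>C. card (U c)) = m"
    using card_UN_disjoint[OF finC, of U] finU disj unionU by simp
  have cardC: "card C = n - 1"
  proof -
    have "a m mod N \<in> {0..<N}" using Npos by auto
    then have "card C = card {0..<N} - 1" unfolding C_def by (simp add: card_Diff_singleton)
    then show ?thesis unfolding N_def by simp
  qed
  have exact2: "card (U c) = 2" if "c \<in> C" for c
  proof (rule ccontr)
    assume "card (U c) \<noteq> 2"
    then have ge3: "card (U c) \<ge> 3" using card2[OF that] by simp
    have "(\<Sum>c\<in>C. card (U c)) = card (U c) + (\<Sum>c\<in>C - {c}. card (U c))"
      using finC that by (simp add: sum.remove)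
    moreover have "(\<Sum>c\<in>C - {c}. card (U c)) \<ge> card (C - {c}) * 2"
      using sum_bounded_below[of "C - {c}" 2 "\<lambda>c. card (U c)"] card2 by auto
    moreover have "card (C - {c}) = n - 2" using cardC that finC by (simp add: card_Diff_singleton)
    ultimately have "m \<ge> 3 + (n - 2) * 2" using sumcard ge3 by simp
    then show False using n2 unfolding m_def by simp
  qed
  fix i assume "i < 2*n-2"
  then have im: "i < m" unfolding m_def by simp
  obtain c where c: "c \<in> C" "i \<in> U c" using cover[OF im] by blast
  obtain x y where xy: "U c = {x, y}" "x \<noteq> y" using exact2[OF c(1)] card_2_iff by metis
  obtain j where j: "U c = {i, j}" "j \<noteq> i" using xy c(2) by auto
  have jm: "j < m" using j Usub[of c] by auto
  have "lambda_aff n c - c = d i + d j" using Tsum[OF c(1)] j by simp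
  then show "\<exists>j<2*n-2. j \<noteq> i \<and>
     ((a (Suc i) - a i) + (a (Suc j) - a j) = int n \<or> (a (Suc i) - a i) + (a (Suc j) - a j) = - (int n * (int n - 1)))"
    using lam[of c] jm j(2) unfolding d_def N_def m_def by auto
qed


theorem proposition3p4:
  fixes n :: nat and rs :: "(int \<Rightarrow> int) list"
  assumes "n \<ge> 2" and "rs \<in> fact_lambda n"
  shows "tree_like n rs \<longleftrightarrow>
    (\<exists>a :: nat \<Rightarrow> int. \<forall>l\<in>{1..2*n-2}.
        \<not> [a (l - 1) = a l] (mod int n)
        \<and> rs ! (l - 1) = aff_refl n (a (l - 1)) (a l)
        \<and> \<bar>a l - a (l - 1)\<bar> < int n)"
proof -
  have n2: "n \<ge> 2" using assms(1) .
  have len: "length rs = 2*n-2" and prd: "refl_prod rs = lambda_aff n"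
    using assms(2) unfolding fact_lambda_def by auto
  have Nge: "int n * (int n - 1) \<ge> 2 * (int n - 1)"
    using n2 by (intro mult_right_mono) auto
  show ?thesis
  proof
    assume "tree_like n rs"
    then obtain A B :: "nat \<Rightarrow> int" where
      AB1: "\<forall>k\<in>{1..2*n-2}. A (k - 1) < B k \<and> \<not> [A (k - 1) = B k] (mod int n)
                       \<and> rs ! (k - 1) = aff_refl n (A (k - 1)) (B k)"
      and AB2: "\<forall>k\<in>{1..2*n-3}. [A k = B k] (mod int n)"
      unfolding tree_like_def by blast
    have AB1': "A i < B (Suc i) \<and> \<not> [A i = B (Suc i)] (mod int n)
                       \<and> rs ! i = aff_refl n (A i) (B (Suc i))" if "i < 2*n-2" for i
      using AB1[rule_format, of "Suc i"] that by simp
    define a where "a k = A 0 + (\<Sum>i<k. B (Suc i) - A i)" for k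
    have aSuc: "a (Suc k) = a k + (B (Suc k) - A k)" for k by (simp add: a_def)
    have acong: "[a k = A k] (mod int n)" if "k < 2*n-2" for k
      using that
    proof (induction k)
      case 0
      then show ?case by (simp add: a_def)
    next
      case (Suc k)
      have ih: "[a k = A k] (mod int n)" using Suc by simp
      have "[A (Suc k) = B (Suc k)] (mod int n)" using AB2 Suc.prems by auto
      then have "int n dvd (A (Suc k) - B (Suc k))" by (simp add: cong_iff_dvd_diff)
      moreover have "int n dvd (a k - A k)" using ih by (simp add: cong_iff_dvd_diff)
      ultimately have "int n dvd ((a k - A k) - (A (Suc k) - B (Suc k)))" using dvd_diff by blast
      then show ?case unfolding aSuc cong_iff_dvd_diff by (simp add: algebra_simps)
    qed
    have chain: "\<not> [a i = a (Suc i)] (mod int n) \<and> rs!i = aff_refl n (a i) (a (Suc i))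
                 \<and> a i < a (Suc i)" if "i < 2*n-2" for i
    proof -
      have h: "A i < B (Suc i)" "\<not> [A i = B (Suc i)] (mod int n)" "rs ! i = aff_refl n (A i) (B (Suc i))"
        using AB1'[OF that] by auto
      have "rs ! i = aff_refl n (a i) (a (Suc i))"
        using h(3) aff_refl_shift[OF cong_sym[OF acong[OF that]], of "a (Suc i)" "B (Suc i)"] aSuc by simp
      moreover have "\<not> [a i = a (Suc i)] (mod int n)"
        using h(2) unfolding aSuc cong_iff_dvd_diff by (simp add: algebra_simps)
      ultimately show ?thesis using h(1) aSuc by simp
    qed
    have small: "a (Suc i) - a i < int n" if hi: "i < 2*n-2" for i
    proof -
      obtain j where j: "j < 2*n-2" "(a (Suc i) - a i) + (a (Suc j) - a j) = int n \<or>
          (a (Suc i) - a i) + (a (Suc j) - a j) = - (int n * (int n - 1))"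
      proof -
        have ch': "\<And>i. i < 2*n-2 \<Longrightarrow> \<not> [a i = a (Suc i)] (mod int n) \<and> rs!i = aff_refl n (a i) (a (Suc i))"
          using chain by blast
        show ?thesis using pairing[OF n2 len prd ch' hi] that by blast
      qed
      have "a i < a (Suc i)" "a j < a (Suc j)" using chain hi j(1) by auto
      moreover have "0 < int n * (int n - 1)" using n2 by simp
      ultimately show ?thesis using j(2) by (smt (verit))
    qed
    show "\<exists>a :: nat \<Rightarrow> int. \<forall>l\<in>{1..2*n-2}.
        \<not> [a (l - 1) = a l] (mod int n)
        \<and> rs ! (l - 1) = aff_refl n (a (l - 1)) (a l)
        \<and> \<bar>a l - a (l - 1)\<bar> < int n"
    proof (intro exI ballI)
      fix l assume l: "l \<in> {1..2*n-2}"
      then obtain i where i: "l = Suc i" "i < 2*n-2" by (cases l) auto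
      show "\<not> [a (l - 1) = a l] (mod int n)
        \<and> rs ! (l - 1) = aff_refl n (a (l - 1)) (a l)
        \<and> \<bar>a l - a (l - 1)\<bar> < int n"
        using chain[OF i(2)] small[OF i(2)] i(1) by auto
    qed
  next
    assume "\<exists>a :: nat \<Rightarrow> int. \<forall>l\<in>{1..2*n-2}.
        \<not> [a (l - 1) = a l] (mod int n)
        \<and> rs ! (l - 1) = aff_refl n (a (l - 1)) (a l)
        \<and> \<bar>a l - a (l - 1)\<bar> < int n"
    then obtain a :: "nat \<Rightarrow> int" where a: "\<forall>l\<in>{1..2*n-2}.
        \<not> [a (l - 1) = a l] (mod int n)
        \<and> rs ! (l - 1) = aff_refl n (a (l - 1)) (a l)
        \<and> \<bar>a l - a (l - 1)\<bar> < int n" by blast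
    have chain: "\<not> [a i = a (Suc i)] (mod int n) \<and> rs!i = aff_refl n (a i) (a (Suc i))
                 \<and> \<bar>a (Suc i) - a i\<bar> < int n" if "i < 2*n-2" for i
      using a[rule_format, of "Suc i"] that by simp
    have dne: "a (Suc i) \<noteq> a i" if "i < 2*n-2" for i
      using chain[OF that] by auto
    have pr: "\<exists>j<2*n-2. j \<noteq> i \<and> ((a (Suc i) - a i) + (a (Suc j) - a j) = int n \<or>
          (a (Suc i) - a i) + (a (Suc j) - a j) = - (int n * (int n - 1)))" if "i < 2*n-2" for i
    proof -
      have ch': "\<And>i. i < 2*n-2 \<Longrightarrow> \<not> [a i = a (Suc i)] (mod int n) \<and> rs!i = aff_refl n (a i) (a (Suc i))"
        using chain by blast
      show ?thesis using pairing[OF n2 len prd ch' that] by blast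
    qed
    have cases: "(\<forall>i<2*n-2. a i < a (Suc i)) \<or> (n = 2 \<and> a 1 = a 0 - 1 \<and> a 2 = a 0 - 2)"
    proof (cases "n = 2")
      case True
      obtain j where j: "j < 2" "j \<noteq> 0" "(a 1 - a 0) + (a (Suc j) - a j) = 2 \<or>
          (a 1 - a 0) + (a (Suc j) - a j) = - 2"
        using pr[of 0] True by auto
      have j1: "j = 1" using j by simp
      have b: "\<bar>a 1 - a 0\<bar> < 2" "\<bar>a 2 - a 1\<bar> < 2" "a 1 \<noteq> a 0" "a 2 \<noteq> a 1"
        using chain[of 0] chain[of 1] dne[of 0] dne[of 1] True by (auto simp: numeral_2_eq_2)
      have "(a 0 < a 1 \<and> a 1 < a 2) \<or> (a 1 = a 0 - 1 \<and> a 2 = a 0 - 2)"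
        using j(3) b unfolding j1 by (auto simp: numeral_2_eq_2 abs_less_iff)
      then show ?thesis
      proof
        assume "a 0 < a 1 \<and> a 1 < a 2"
        then have "\<forall>i<2*n-2. a i < a (Suc i)"
          using True by (auto simp: less_Suc_eq numeral_2_eq_2)
        then show ?thesis by blast
      qed (use True in blast)
    next
      case False
      then have n3: "n \<ge> 3" using n2 by simp
      have Nge3: "int n * (int n - 1) \<ge> 3 * (int n - 1)"
        using n3 by (intro mult_right_mono) auto
      have "a i < a (Suc i)" if hi: "i < 2*n-2" for i
      proof (rule ccontr)
        assume ng: "\<not> a i < a (Suc i)"
        obtain j where j: "j < 2*n-2" "(a (Suc i) - a i) + (a (Suc j) - a j) = int n \<or>
          (a (Suc i) - a i) + (a (Suc j) - a j) = - (int n * (int n - 1))"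
          using pr[OF hi] by blast
        have "\<bar>a (Suc i) - a i\<bar> < int n" "\<bar>a (Suc j) - a j\<bar> < int n"
          using chain hi j(1) by auto
        moreover have "int n \<ge> 3" using n3 by simp
        ultimately show False using j(2) ng Nge3 by (auto simp: abs_less_iff)
      qed
      then show ?thesis by blast
    qed
    show "tree_like n rs"
      using cases
    proof
      assume pos: "\<forall>i<2*n-2. a i < a (Suc i)"
      show ?thesis unfolding tree_like_def
      proof (intro exI conjI ballI)
        fix k assume k: "k \<in> {1..2*n-2}"
        then obtain i where i: "k = Suc i" "i < 2*n-2" by (cases k) auto
        show "a (k - 1) < a k" "\<not> [a (k - 1) = a k] (mod int n)"
             "rs ! (k - 1) = aff_refl n (a (k - 1)) (a k)"
          using pos chain[OF i(2)] i by auto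
      next
        fix k show "[a k = a k] (mod int n)" by simp
      qed
    next
      assume neg: "n = 2 \<and> a 1 = a 0 - 1 \<and> a 2 = a 0 - 2"
      have c0: "\<not> [a 0 = a 1] (mod int n)" "rs!0 = aff_refl n (a 0) (a 1)"
        using chain[of 0] neg by auto
      have c1: "\<not> [a 1 = a 2] (mod int n)" "rs!1 = aff_refl n (a 1) (a 2)"
        using chain[of 1] neg by (auto simp: numeral_2_eq_2)
      have d1: "a 2 < a 1"
      proof -
        have "\<bar>a 2 - a 1\<bar> < 2" using chain[of 1] neg by (auto simp: numeral_2_eq_2)
        moreover have "a 2 \<noteq> a 1" using dne[of 1] neg by (simp add: numeral_2_eq_2)
        ultimately show ?thesis using neg by auto
      qed
      have X: "\<forall>k\<in>{1..2*n-2}. a (Suc (k - 1)) < a (k - 1) \<and> \<not> [a (Suc (k - 1)) = a (k - 1)] (mod int n)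
             \<and> rs ! (k - 1) = aff_refl n (a (Suc (k - 1))) (a (k - 1))"
      proof
        fix k assume k: "k \<in> {1..2*n-2}"
        then have "k = 1 \<or> k = 2" using neg by auto
        then show "a (Suc (k - 1)) < a (k - 1) \<and> \<not> [a (Suc (k - 1)) = a (k - 1)] (mod int n)
             \<and> rs ! (k - 1) = aff_refl n (a (Suc (k - 1))) (a (k - 1))"
          using c0 c1 d1 neg aff_refl_sym[OF c0(1)] aff_refl_sym[OF c1(1)]
          by (auto simp: cong_sym_eq numeral_2_eq_2)
      qed
      have Y: "\<forall>k\<in>{1..2*n-3}. [a (Suc k) = a (k - 1)] (mod int n)"
      proof
        fix k assume "k \<in> {1..2*n-3}"
        then have "k = 1" using neg by auto
        then show "[a (Suc k) = a (k - 1)] (mod int n)" using neg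
          by (simp add: cong_iff_dvd_diff numeral_2_eq_2)
      qed
      show ?thesis unfolding tree_like_def
        apply (rule exI[of _ "\<lambda>k. a (Suc k)"], rule exI[of _ "\<lambda>k. a (k - 1)"])
        using X Y by simp
    qed
  qed
qed

end
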